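(* For any directed graph $G=(V,E,w)$ with edge weights $w:E\to\mathbb{R}_+$ and vertex weights $\pi:V\to\mathbb{R}_+$, $\lambda^{\triangle}_\pi(G)\le 2\,\vec\phi_\pi(G)$.
   Context: Let $n=|V|$. $\vec\phi_\pi(G)=\min_{\emptyset\ne S\subsetneq V}\frac{\min\{w(\delta^+(S)),w(\delta^-(S))\}}{\min\{\pi(S),\pi(\overline S)\}}$, where $\delta^+(S)$ / $\delta^-(S)$ are the edges leaving / entering $S$ and $\pi(S)=\sum_{i\in S}\pi(i)$. $\mathcal F(G)$ is the set of circulations $F:E\to\mathbb{R}_{\ge0}$ with $F(e)\le w(e)$ ($F(i,j)=0$ if $ij\notin E$). $\lambda^{\triangle}_\pi(G)=\min\max_{F\in\mathcal F(G)}\sum_{i<j}\frac12(F(i,j)+F(j,i))\|v_i-v_j\|^2$, the min over $v_1,\dots,v_n\in\mathbb{R}^n$ with $\sum_i\pi(i)v_i=0$, $\sum_i\pi(i)\|v_i\|^2=1$, and $\|v_i-v_k\|^2+\|v_k-v_j\|^2\ge\|v_i-v_j\|^2$ for all $i,j,k$. *)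

theory Defs
  imports Complex_Main
begin

text \<open>Conventions: the vertex set is V = {0..<n}; a directed graph is given by an edge set
  E \<subseteq> V \<times> V and an edge weight function w (only its values on E matter);
  vertex weights are pi. Vectors in R^n are functions nat \<Rightarrow> real with coordinates 0..<n.\<close>

definition vset :: "nat \<Rightarrow> nat set" where
  "vset n = {0..<n}"

definition pi_weight :: "(nat \<Rightarrow> real) \<Rightarrow> nat set \<Rightarrow> real" where
  "pi_weight p S = (\<Sum>i\<in>S. p i)"

definition out_weight :: "nat \<Rightarrow> (nat \<times> nat) set \<Rightarrow> (nat \<Rightarrow> nat \<Rightarrow> real) \<Rightarrow> nat set \<Rightarrow> real" where
  "out_weight n E w S = (\<Sum>e\<in>E \<inter> (S \<times> (vset n - S)). w (fst e) (snd e))"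

definition in_weight :: "nat \<Rightarrow> (nat \<times> nat) set \<Rightarrow> (nat \<Rightarrow> nat \<Rightarrow> real) \<Rightarrow> nat set \<Rightarrow> real" where
  "in_weight n E w S = (\<Sum>e\<in>E \<inter> ((vset n - S) \<times> S). w (fst e) (snd e))"

definition dir_expansion :: "nat \<Rightarrow> (nat \<times> nat) set \<Rightarrow> (nat \<Rightarrow> nat \<Rightarrow> real) \<Rightarrow> (nat \<Rightarrow> real) \<Rightarrow> real" where
  "dir_expansion n E w p =
     Min ((\<lambda>S. min (out_weight n E w S) (in_weight n E w S)
                 / min (pi_weight p S) (pi_weight p (vset n - S)))
          ` {S. S \<noteq> {} \<and> S \<subset> vset n})"

definition circulations :: "nat \<Rightarrow> (nat \<times> nat) set \<Rightarrow> (nat \<Rightarrow> nat \<Rightarrow> real) \<Rightarrow> (nat \<Rightarrow> nat \<Rightarrow> real) set" where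
  "circulations n E w = {F.
      (\<forall>i j. 0 \<le> F i j) \<and>
      (\<forall>i j. (i, j) \<in> E \<longrightarrow> F i j \<le> w i j) \<and>
      (\<forall>i j. (i, j) \<notin> E \<longrightarrow> F i j = 0) \<and>
      (\<forall>i<n. (\<Sum>j<n. F i j) = (\<Sum>j<n. F j i))}"

definition sqdist :: "nat \<Rightarrow> (nat \<Rightarrow> real) \<Rightarrow> (nat \<Rightarrow> real) \<Rightarrow> real" where
  "sqdist n x y = (\<Sum>k<n. (x k - y k)^2)"

definition sqnorm :: "nat \<Rightarrow> (nat \<Rightarrow> real) \<Rightarrow> real" where
  "sqnorm n x = (\<Sum>k<n. (x k)^2)"

definition feasible_emb :: "nat \<Rightarrow> (nat \<Rightarrow> real) \<Rightarrow> (nat \<Rightarrow> nat \<Rightarrow> real) \<Rightarrow> bool" where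
  "feasible_emb n p v \<longleftrightarrow>
      (\<forall>k<n. (\<Sum>i<n. p i * v i k) = 0) \<and>
      (\<Sum>i<n. p i * sqnorm n (v i)) = 1 \<and>
      (\<forall>i<n. \<forall>j<n. \<forall>k<n. sqdist n (v i) (v k) + sqdist n (v k) (v j) \<ge> sqdist n (v i) (v j))"

definition flow_energy :: "nat \<Rightarrow> (nat \<Rightarrow> nat \<Rightarrow> real) \<Rightarrow> (nat \<Rightarrow> nat \<Rightarrow> real) \<Rightarrow> real" where
  "flow_energy n F v = (\<Sum>(i, j)\<in>{(i, j). i < j \<and> j < n}. (1/2) * (F i j + F j i) * sqdist n (v i) (v j))"

definition lambda_tri :: "nat \<Rightarrow> (nat \<times> nat) set \<Rightarrow> (nat \<Rightarrow> nat \<Rightarrow> real) \<Rightarrow> (nat \<Rightarrow> real) \<Rightarrow> real" where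
  "lambda_tri n E w p =
     Inf ((\<lambda>v. Sup ((\<lambda>F. flow_energy n F v) ` circulations n E w)) ` {v. feasible_emb n p v})"

end

theory Submission
  imports Defs
begin

lemma sum_pairs:
  fixes f :: "nat \<Rightarrow> nat \<Rightarrow> real"
  shows "(\<Sum>(i,j)\<in>{(i,j). i<j \<and> j<n}. f i j + f j i) = (\<Sum>i<n. \<Sum>j<n. f i j) - (\<Sum>i<n. f i i)"
proof (induction n)
  case 0 then show ?case by simp
next
  case (Suc n)
  have set: "{(i,j). i<j \<and> j<Suc n} = {(i,j). i<j \<and> j<n} \<union> (\<lambda>i. (i,n)) ` {..<n}" by auto
  have fin: "finite {(i,j). i<j \<and> j<(n::nat)}"
    by (rule finite_subset[of _ "{..<n} \<times> {..<n}"]) auto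
  have "(\<Sum>(i,j)\<in>{(i,j). i<j \<and> j<Suc n}. f i j + f j i) = (\<Sum>(i,j)\<in>{(i,j). i<j \<and> j<n}. f i j + f j i) + (\<Sum>i<n. f i n + f n i)"
    unfolding set by (subst sum.union_disjoint) (auto simp: fin sum.reindex inj_on_def)
  then show ?case using Suc.IH by (simp add: sum.distrib)
qed

lemma sqd1:
  assumes "0 < n"
  shows "sqdist n (\<lambda>k. if k = 0 then x else 0) (\<lambda>k. if k = 0 then y else 0) = (x - y)^2"
proof -
  have "sqdist n (\<lambda>k. if k = 0 then x else 0) (\<lambda>k. if k = 0 then y else 0) = (\<Sum>k<n. if k = 0 then (x-y)^2 else 0)"
    unfolding sqdist_def by (rule sum.cong) auto
  also have "\<dots> = (x-y)^2" using assms by (simp add: sum.delta)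
  finally show ?thesis .
qed

lemma sqn1:
  assumes "0 < n"
  shows "sqnorm n (\<lambda>k. if k = 0 then x else 0) = x^2"
proof -
  have "sqnorm n (\<lambda>k. if k = 0 then x else 0) = (\<Sum>k<n. if k = 0 then x^2 else 0)"
    unfolding sqnorm_def by (rule sum.cong) auto
  also have "\<dots> = x^2" using assms by (simp add: sum.delta)
  finally show ?thesis .
qed

theorem mainTheorem7:
  fixes n :: nat and E :: "(nat \<times> nat) set" and w :: "nat \<Rightarrow> nat \<Rightarrow> real" and p :: "nat \<Rightarrow> real"
  assumes "2 \<le> n"
    and "E \<subseteq> vset n \<times> vset n"
    and "\<forall>(i, j)\<in>E. 0 < w i j"
    and "\<forall>i\<in>vset n. 0 < p i"
  shows "lambda_tri n E w p \<le> 2 * dir_expansion n E w p"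
proof -
  have V: "vset n = {..<n}" unfolding vset_def by auto
  define val where "val = (\<lambda>S. min (out_weight n E w S) (in_weight n E w S)
                 / min (pi_weight p S) (pi_weight p (vset n - S)))"
  have fin: "finite {S. S \<noteq> {} \<and> S \<subset> vset n}"
    by (rule finite_subset[of _ "Pow (vset n)"]) (auto simp: vset_def)
  have 01: "0 \<in> vset n" "1 \<in> vset n" using assms(1) by (auto simp: vset_def)
  have ne: "{0} \<in> {S. S \<noteq> {} \<and> S \<subset> vset n}" 
  proof -
    have "{0} \<subseteq> vset n" using 01 by simp
    moreover have "{0} \<noteq> vset n" using 01 by (metis singletonD zero_neq_one)
    ultimately show ?thesis by auto
  qed
  have "dir_expansion n E w p \<in> val ` {S. S \<noteq> {} \<and> S \<subset> vset n}"
    unfolding dir_expansion_def val_def[symmetric]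
    using Min_in[OF finite_imageI[OF fin]] ne by blast
  then obtain S where S: "S \<noteq> {}" "S \<subset> vset n" and dS: "dir_expansion n E w p = val S" by blast
  define A where "A = pi_weight p S"
  define B where "B = pi_weight p (vset n - S)"
  have finS: "finite S" using S(2) finite_subset by (auto simp: vset_def)
  have pS: "\<forall>i\<in>S. 0 < p i" using assms(4) S(2) by auto
  have Apos: "A > 0" unfolding A_def pi_weight_def
    using sum_pos[OF finS S(1)] pS by auto
  have Bpos: "B > 0" unfolding B_def pi_weight_def
    using S(2) assms(4) by (intro sum_pos) (auto simp: vset_def)
  define t where "t = 1 / sqrt (A * B * (A + B))"
  define a where "a = t * B"
  define b where "b = - t * A"
  define g where "g = (\<lambda>i. if i \<in> S then a else b)"
  define v :: "nat \<Rightarrow> nat \<Rightarrow> real" where "v = (\<lambda>i k. if k = 0 then g i else 0)"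
  have n0: "0 < n" using assms(1) by auto
  have sd: "sqdist n (v i) (v j) = (g i - g j)^2" for i j
    unfolding v_def using sqd1[OF n0] .
  have sn: "sqnorm n (v i) = (g i)^2" for i
    unfolding v_def using sqn1[OF n0] .
  have t2: "t^2 * (A * B * (A + B)) = 1"
    unfolding t_def using Apos Bpos by (simp add: power_divide)
  have split: "(\<Sum>i<n. h i) = (\<Sum>i\<in>S. h i) + (\<Sum>i\<in>vset n - S. h i)" for h :: "nat \<Rightarrow> real"
  proof -
    have "(\<Sum>i<n. h i) = sum h (vset n)" by (simp add: V)
    also have "\<dots> = sum h (vset n - S) + sum h S"
      by (rule sum.subset_diff) (use S(2) in \<open>auto simp: vset_def\<close>)
    finally show ?thesis by simp
  qed
  have feas: "feasible_emb n p v"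
    unfolding feasible_emb_def
  proof (intro conjI allI impI)
    fix k assume "k < n"
    show "(\<Sum>i<n. p i * v i k) = 0"
    proof (cases "k = 0")
      case True
      have "(\<Sum>i<n. p i * v i k) = (\<Sum>i\<in>S. p i * a) + (\<Sum>i\<in>vset n - S. p i * b)"
        unfolding split using True by (simp add: v_def g_def)
      also have "\<dots> = A * a + B * b"
        unfolding A_def B_def pi_weight_def by (simp add: sum_distrib_right)
      also have "\<dots> = 0" unfolding a_def b_def by (simp add: algebra_simps)
      finally show ?thesis .
    qed (simp add: v_def)
  next
    have "(\<Sum>i<n. p i * sqnorm n (v i)) = (\<Sum>i\<in>S. p i * a^2) + (\<Sum>i\<in>vset n - S. p i * b^2)"
      unfolding split sn by (simp add: g_def)
    also have "\<dots> = A * a^2 + B * b^2"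
      unfolding A_def B_def pi_weight_def by (simp add: sum_distrib_right)
    also have "\<dots> = t^2 * (A * B * (A + B))" unfolding a_def b_def by (simp add: algebra_simps power2_eq_square)
    also have "\<dots> = 1" by (rule t2)
    finally show "(\<Sum>i<n. p i * sqnorm n (v i)) = 1" .
  next
    fix i j k
    show "sqdist n (v i) (v j) \<le> sqdist n (v i) (v k) + sqdist n (v k) (v j)"
      unfolding sd g_def by (auto simp: power2_eq_square)
  qed
  define X where "X = (\<lambda>F::nat \<Rightarrow> nat \<Rightarrow> real. \<Sum>i\<in>S. \<Sum>j\<in>vset n - S. F i j)"
  define Y where "Y = (\<lambda>F::nat \<Rightarrow> nat \<Rightarrow> real. \<Sum>i\<in>vset n - S. \<Sum>j\<in>S. F i j)"
  define M where "M = min (out_weight n E w S) (in_weight n E w S)"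
  define D where "D = (a - b)^2"
  have finV: "finite (vset n)" by (simp add: vset_def)
  have finVS: "finite (vset n - S)" using finV by simp
  have SV: "S \<subseteq> vset n" using S(2) by auto
  have circ: "0 \<le> F i j" "(i,j) \<in> E \<Longrightarrow> F i j \<le> w i j" "(i,j) \<notin> E \<Longrightarrow> F i j = 0"
      "i < n \<Longrightarrow> (\<Sum>j<n. F i j) = (\<Sum>j<n. F j i)"
    if "F \<in> circulations n E w" for F i j
    using that unfolding circulations_def by auto
  have XY: "X F = Y F" if F: "F \<in> circulations n E w" for F
  proof -
    have "(\<Sum>i\<in>S. \<Sum>j<n. F i j) = (\<Sum>i\<in>S. \<Sum>j<n. F j i)"
    proof (rule sum.cong[OF refl])
      fix i assume "i \<in> S"
      then show "(\<Sum>j<n. F i j) = (\<Sum>j<n. F j i)" using circ(4)[OF F] SV by (auto simp: vset_def)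
    qed
    moreover have "(\<Sum>i\<in>S. \<Sum>j<n. F i j) = (\<Sum>i\<in>S. \<Sum>j\<in>S. F i j) + X F"
      unfolding split X_def by (simp add: sum.distrib)
    moreover have "(\<Sum>i\<in>S. \<Sum>j<n. F j i) = (\<Sum>i\<in>S. \<Sum>j\<in>S. F j i) + (\<Sum>i\<in>S. \<Sum>j\<in>vset n - S. F j i)"
      unfolding split by (simp add: sum.distrib)
    moreover have "(\<Sum>i\<in>S. \<Sum>j\<in>S. F j i) = (\<Sum>i\<in>S. \<Sum>j\<in>S. F i j)"
      by (rule sum.swap)
    moreover have "(\<Sum>i\<in>S. \<Sum>j\<in>vset n - S. F j i) = Y F"
      unfolding Y_def by (rule sum.swap)
    ultimately show ?thesis by linarith
  qed
  have Xnn: "0 \<le> X F" if F: "F \<in> circulations n E w" for F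
    unfolding X_def using circ(1)[OF F] by (intro sum_nonneg) auto
  have Xout: "X F \<le> out_weight n E w S" if F: "F \<in> circulations n E w" for F
  proof -
    have "X F = (\<Sum>e\<in>S \<times> (vset n - S). F (fst e) (snd e))"
      unfolding X_def by (simp add: sum.cartesian_product case_prod_beta')
    also have "\<dots> = (\<Sum>e\<in>E \<inter> (S \<times> (vset n - S)). F (fst e) (snd e))"
      using finS finVS circ(3)[OF F] by (intro sum.mono_neutral_right) (auto, metis)
    also have "\<dots> \<le> (\<Sum>e\<in>E \<inter> (S \<times> (vset n - S)). w (fst e) (snd e))"
      using circ(2)[OF F] by (intro sum_mono) auto
    finally show ?thesis unfolding out_weight_def .
  qed
  have Yin: "Y F \<le> in_weight n E w S" if F: "F \<in> circulations n E w" for F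
  proof -
    have "Y F = (\<Sum>e\<in>(vset n - S) \<times> S. F (fst e) (snd e))"
      unfolding Y_def by (simp add: sum.cartesian_product case_prod_beta')
    also have "\<dots> = (\<Sum>e\<in>E \<inter> ((vset n - S) \<times> S). F (fst e) (snd e))"
      using finS finVS circ(3)[OF F] by (intro sum.mono_neutral_right) (auto, metis)
    also have "\<dots> \<le> (\<Sum>e\<in>E \<inter> ((vset n - S) \<times> S). w (fst e) (snd e))"
      using circ(2)[OF F] by (intro sum_mono) auto
    finally show ?thesis unfolding in_weight_def .
  qed
  have gd: "(g i - g j)^2 = D * (if (i \<in> S) = (j \<in> S) then 0 else 1)" for i j
    unfolding g_def D_def by (auto simp: power2_commute)
  have energy: "flow_energy n F v = D * X F" if F: "F \<in> circulations n E w" for F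
  proof -
    define f where "f = (\<lambda>i j. (1/2) * D * (F i j * (if (i \<in> S) = (j \<in> S) then 0 else 1)))"
    have "flow_energy n F v = (\<Sum>(i,j)\<in>{(i,j). i<j \<and> j<n}. f i j + f j i)"
      unfolding flow_energy_def sd gd f_def
      by (intro sum.cong) (auto simp: algebra_simps)
    also have "\<dots> = (\<Sum>i<n. \<Sum>j<n. f i j)"
      unfolding sum_pairs by (simp add: f_def)
    also have "\<dots> = (1/2) * D * (\<Sum>i<n. \<Sum>j<n. F i j * (if (i \<in> S) = (j \<in> S) then 0 else 1))"
      unfolding f_def by (simp add: sum_distrib_left)
    also have "(\<Sum>i<n. \<Sum>j<n. F i j * (if (i \<in> S) = (j \<in> S) then 0 else 1)) = X F + Y F"
    proof -
      have a1: "(\<Sum>j<n. F i j * (if (i \<in> S) = (j \<in> S) then 0 else 1)) = (\<Sum>j\<in>vset n - S. F i j)" if "i \<in> S" for i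
        unfolding split using that by simp
      have a2: "(\<Sum>j<n. F i j * (if (i \<in> S) = (j \<in> S) then 0 else 1)) = (\<Sum>j\<in>S. F i j)" if "i \<notin> S" for i
        unfolding split using that by simp
      show ?thesis unfolding split X_def Y_def using a1 a2 by simp
    qed
    finally show ?thesis using XY[OF F] by simp
  qed
  have Dm: "D * min A B \<le> 2"
  proof -
    have "D * (A * B) = t^2 * (A * B * (A + B)) * (A + B)"
      unfolding D_def a_def b_def by (simp add: algebra_simps power2_eq_square)
    then have DAB: "D * (A * B) = A + B" using t2 by simp
    show ?thesis
    proof (cases "A \<le> B")
      case True
      have "D * A * B = A + B" using DAB by (simp add: mult.assoc)
      then have "D * A * B \<le> 2 * B" using True by linarith
      then show ?thesis using True Bpos by (simp add: min_def)
    next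
      case False
      have "D * B * A = A + B" using DAB by (simp add: ac_simps)
      then have "D * B * A \<le> 2 * A" using False by linarith
      then show ?thesis using False Apos by (simp add: min_def)
    qed
  qed
  have Dnn: "0 \<le> D" unfolding D_def by simp
  have mpos: "0 < min A B" using Apos Bpos by simp
  have bound: "flow_energy n F v \<le> 2 * val S" if F: "F \<in> circulations n E w" for F
  proof -
    have XM: "X F \<le> M" unfolding M_def using Xout[OF F] Yin[OF F] XY[OF F] by simp
    have M0: "0 \<le> M" using XM Xnn[OF F] by simp
    have "flow_energy n F v = D * X F" by (rule energy[OF F])
    also have "\<dots> \<le> D * M" using XM Dnn by (rule mult_left_mono)
    also have "\<dots> \<le> 2 * (M / min A B)"
    proof -
      have "D * M * min A B \<le> 2 * M" using Dm M0
        by (metis mult.commute mult.left_commute mult_right_mono)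
      then show ?thesis using mpos by (simp add: field_simps)
    qed
    also have "\<dots> = 2 * val S" unfolding val_def M_def A_def B_def by simp
    finally show ?thesis .
  qed
  have zero: "(\<lambda>i j. 0) \<in> circulations n E w"
    unfolding circulations_def using assms(3) by auto
  have supv: "Sup ((\<lambda>F. flow_energy n F v) ` circulations n E w) \<le> 2 * val S"
    using zero bound by (intro cSup_least) auto
  have nonneg: "0 \<le> Sup ((\<lambda>F. flow_energy n F u) ` circulations n E w)" for u
  proof -
    define W where "W = (\<Sum>(i, j)\<in>{(i, j). i < j \<and> j < n}. (1/2) * (\<bar>w i j\<bar> + \<bar>w j i\<bar>) * sqdist n (u i) (u j))"
    have "flow_energy n F u \<le> W" if F: "F \<in> circulations n E w" for F
      unfolding flow_energy_def W_def
    proof (intro sum_mono)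
      fix x assume "x \<in> {(i, j). i < j \<and> j < n}"
      obtain i j where x: "x = (i,j)" by fastforce
      have le: "F k l \<le> \<bar>w k l\<bar>" for k l
        using circ(2,3)[OF F, of k l] by (cases "(k,l) \<in> E") auto
      have "0 \<le> sqdist n (u i) (u j)" unfolding sqdist_def by (intro sum_nonneg) auto
      then show "(case x of (i, j) \<Rightarrow> 1 / 2 * (F i j + F j i) * sqdist n (u i) (u j))
          \<le> (case x of (i, j) \<Rightarrow> 1 / 2 * (\<bar>w i j\<bar> + \<bar>w j i\<bar>) * sqdist n (u i) (u j))"
        unfolding x using le[of i j] le[of j i] by (simp add: mult_right_mono)
    qed
    then have bdd: "bdd_above ((\<lambda>F. flow_energy n F u) ` circulations n E w)"
      by (intro bdd_aboveI) auto
    have "flow_energy n (\<lambda>i j. 0) u = 0" unfolding flow_energy_def by simp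
    then show ?thesis using cSup_upper[OF _ bdd, of 0] zero by (metis image_eqI)
  qed
  have "lambda_tri n E w p \<le> Sup ((\<lambda>F. flow_energy n F v) ` circulations n E w)"
    unfolding lambda_tri_def using feas nonneg
    by (intro cInf_lower) (auto intro: bdd_belowI[of _ 0])
  then show ?thesis using supv dS by simp
qed

end
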